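(* Let $\sigma$ be a 2-structure and $X\subsetneq V(\sigma)$ with $\sigma[X]$ prime; write $\overline{X}=V(\sigma)\setminus X$. Suppose Statement (S3) holds (there is no $Y\subseteq\overline{X}$ with $|Y|=3$ and $\sigma[X\cup Y]$ prime). Let $e,f\in E(\sigma)$ and $\alpha\in X$. If the outside graph $\Gamma_{(\sigma,\overline{X})}$ has no isolated vertices, then: (1) if $\langle X\rangle^{(e,f)}_\sigma\neq\emptyset$, then $\langle X\rangle^{(e',f')}_\sigma=\emptyset$ for all $e',f'\in E(\sigma)$ with $\{e',f'\}\neq\{e,f\}$; (2) if $X^{(e,f)}_\sigma(\alpha)\neq\emptyset$, then $X^{(e',f')}_\sigma(\alpha)=\emptyset$ for all $e',f'\in E(\sigma)$ with $\{e',f'\}\neq\{e,f\}$.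
   Context: A 2-structure $\sigma$ consists of a vertex set $V(\sigma)$ and an equivalence relation $\equiv_\sigma$ on ordered pairs of distinct vertices; $E(\sigma)$ is its set of classes; $\sigma[W]$ is the induced 2-structure on $W$. A module is a set $M$ such that for all $x,y\in M$ and $v\notin M$, $(x,v)\equiv_\sigma(y,v)$ and $(v,x)\equiv_\sigma(v,y)$; $\sigma$ is prime if $|V(\sigma)|\geq3$ and its only modules are $\emptyset$, $V(\sigma)$ and singletons. Given $\sigma[X]$ prime: $\langle X\rangle_\sigma=\{v\in\overline{X}: X\text{ is a module of }\sigma[X\cup\{v\}]\}$; for $\alpha\in X$, $X_\sigma(\alpha)=\{v\in\overline{X}:\{\alpha,v\}\text{ is a module of }\sigma[X\cup\{v\}]\}$. For $e,f\in E(\sigma)$: $\langle X\rangle^{(e,f)}_\sigma=\{v\in\langle X\rangle_\sigma:(v,\beta)\in e,(\beta,v)\in f\}$ for any $\beta\in X$ (independent of $\beta$); $X^{(e,f)}_\sigma(\alpha)=\{v\in X_\sigma(\alpha):(v,\alpha)\in e,(\alpha,v)\in f\}$. The outside graph $\Gamma_{(\sigma,\overline{X})}$ has vertex set $\overline{X}$ and edges the 2-element sets $Y\subseteq\overline{X}$ with $\sigma[X\cup Y]$ prime. *)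

theory Defs
  imports Main
begin

definition offdiag :: "'a set \<Rightarrow> ('a \<times> 'a) set" where
  "offdiag V = {(x, y). x \<in> V \<and> y \<in> V \<and> x \<noteq> y}"

definition two_structure :: "'a set \<Rightarrow> (('a \<times> 'a) \<times> ('a \<times> 'a)) set \<Rightarrow> bool" where
  "two_structure V R \<longleftrightarrow> equiv (offdiag V) R"

definition classes :: "'a set \<Rightarrow> (('a \<times> 'a) \<times> ('a \<times> 'a)) set \<Rightarrow> ('a \<times> 'a) set set" where
  "classes V R = offdiag V // R"

definition induced_rel :: "(('a \<times> 'a) \<times> ('a \<times> 'a)) set \<Rightarrow> 'a set \<Rightarrow> (('a \<times> 'a) \<times> ('a \<times> 'a)) set" where
  "induced_rel R W = R \<inter> (offdiag W \<times> offdiag W)"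

definition is_module :: "'a set \<Rightarrow> (('a \<times> 'a) \<times> ('a \<times> 'a)) set \<Rightarrow> 'a set \<Rightarrow> bool" where
  "is_module V R M \<longleftrightarrow> M \<subseteq> V \<and>
     (\<forall>x\<in>M. \<forall>y\<in>M. \<forall>v\<in>V - M. ((x, v), (y, v)) \<in> R \<and> ((v, x), (v, y)) \<in> R)"

text \<open>|V| \<ge> 3 is written as the existence of three distinct vertices (so that it also
  makes sense for infinite V).\<close>
definition prime_2s :: "'a set \<Rightarrow> (('a \<times> 'a) \<times> ('a \<times> 'a)) set \<Rightarrow> bool" where
  "prime_2s V R \<longleftrightarrow> (\<exists>a\<in>V. \<exists>b\<in>V. \<exists>c\<in>V. a \<noteq> b \<and> a \<noteq> c \<and> b \<noteq> c) \<and>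
     (\<forall>M. is_module V R M \<longrightarrow> M = {} \<or> M = V \<or> (\<exists>x. M = {x}))"

definition ext_set :: "'a set \<Rightarrow> (('a \<times> 'a) \<times> ('a \<times> 'a)) set \<Rightarrow> 'a set \<Rightarrow> 'a set" where
  "ext_set V R X = {v \<in> V - X. is_module (X \<union> {v}) (induced_rel R (X \<union> {v})) X}"

definition ext_at :: "'a set \<Rightarrow> (('a \<times> 'a) \<times> ('a \<times> 'a)) set \<Rightarrow> 'a set \<Rightarrow> 'a \<Rightarrow> 'a set" where
  "ext_at V R X \<alpha> = {v \<in> V - X. is_module (X \<union> {v}) (induced_rel R (X \<union> {v})) {\<alpha>, v}}"

text \<open><X>^(e,f)_sigma; the definition uses some beta in X (independent of the choice).\<close>
definition ext_set_ef :: "'a set \<Rightarrow> (('a \<times> 'a) \<times> ('a \<times> 'a)) set \<Rightarrow> 'a set \<Rightarrow>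
    ('a \<times> 'a) set \<Rightarrow> ('a \<times> 'a) set \<Rightarrow> 'a set" where
  "ext_set_ef V R X e f = {v \<in> ext_set V R X. \<exists>\<beta>\<in>X. (v, \<beta>) \<in> e \<and> (\<beta>, v) \<in> f}"

definition ext_at_ef :: "'a set \<Rightarrow> (('a \<times> 'a) \<times> ('a \<times> 'a)) set \<Rightarrow> 'a set \<Rightarrow> 'a \<Rightarrow>
    ('a \<times> 'a) set \<Rightarrow> ('a \<times> 'a) set \<Rightarrow> 'a set" where
  "ext_at_ef V R X \<alpha> e f = {v \<in> ext_at V R X \<alpha>. (v, \<alpha>) \<in> e \<and> (\<alpha>, v) \<in> f}"

definition outside_edge :: "'a set \<Rightarrow> (('a \<times> 'a) \<times> ('a \<times> 'a)) set \<Rightarrow> 'a set \<Rightarrow> 'a \<Rightarrow> 'a \<Rightarrow> bool" where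
  "outside_edge V R X u w \<longleftrightarrow> u \<in> V - X \<and> w \<in> V - X \<and> u \<noteq> w \<and>
     prime_2s (X \<union> {u, w}) (induced_rel R (X \<union> {u, w}))"

end

theory Submission
  imports Defs
begin

lemma mod_iff:
  "is_module W (induced_rel R W) M \<longleftrightarrow> M \<subseteq> W \<and>
     (\<forall>x\<in>M. \<forall>y\<in>M. \<forall>z\<in>W - M. ((x, z), (y, z)) \<in> R \<and> ((z, x), (z, y)) \<in> R)"
  unfolding is_module_def induced_rel_def offdiag_def by blast

lemma modD:
  assumes "is_module W (induced_rel R W) M" "x \<in> M" "y \<in> M" "z \<in> W" "z \<notin> M"
  shows "((x, z), (y, z)) \<in> R \<and> ((z, x), (z, y)) \<in> R"
  using assms unfolding mod_iff by blast

lemma modI: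
  assumes "M \<subseteq> W"
    "\<And>x y z. x \<in> M \<Longrightarrow> y \<in> M \<Longrightarrow> z \<in> W \<Longrightarrow> z \<notin> M \<Longrightarrow> ((x, z), (y, z)) \<in> R \<and> ((z, x), (z, y)) \<in> R"
  shows "is_module W (induced_rel R W) M"
  using assms unfolding mod_iff by blast

lemma mod_restrict:
  assumes "is_module Z (induced_rel R Z) M" "W \<subseteq> Z"
  shows "is_module W (induced_rel R W) (M \<inter> W)"
  using assms unfolding mod_iff by blast

lemma prime_mod:
  assumes "prime_2s W (induced_rel R W)" "is_module W (induced_rel R W) M"
  shows "M = {} \<or> M = W \<or> (\<exists>x. M = {x})"
  using assms unfolding prime_2s_def by blast

lemma nontriv:
  assumes "prime_2s W (induced_rel R W)" "is_module W (induced_rel R W) M"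
    "a \<in> M" "b \<in> M" "a \<noteq> b" "c \<in> W" "c \<notin> M"
  shows False
  using prime_mod[OF assms(1,2)] assms(3-7) by auto

locale L =
  fixes V :: "'a set" and R :: "(('a \<times> 'a) \<times> ('a \<times> 'a)) set" and X :: "'a set"
  assumes eqv: "equiv (offdiag V) R"
    and XsV: "X \<subseteq> V"
    and Xprime: "prime_2s X (induced_rel R X)"
    and S3: "\<not> (\<exists>Y. Y \<subseteq> V - X \<and> card Y = 3 \<and> prime_2s (X \<union> Y) (induced_rel R (X \<union> Y)))"
    and noiso: "\<forall>u\<in>V - X. \<exists>w. outside_edge V R X u w"
begin

lemma symR: "(p, q) \<in> R \<Longrightarrow> (q, p) \<in> R"
  using eqv unfolding equiv_def by (meson symD)

lemma transR: "(p, q) \<in> R \<Longrightarrow> (q, r) \<in> R \<Longrightarrow> (p, r) \<in> R"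
  using eqv unfolding equiv_def by (meson transD)

lemma via: "(p, r) \<in> R \<Longrightarrow> (q, r) \<in> R \<Longrightarrow> (p, q) \<in> R"
  using symR transR by blast

lemma reflR: "(p, q) \<in> R \<Longrightarrow> (p, p) \<in> R"
  using symR transR by blast

lemma cls_closed: "e \<in> classes V R \<Longrightarrow> p \<in> e \<Longrightarrow> (p, q) \<in> R \<Longrightarrow> q \<in> e"
  unfolding classes_def by (erule quotientE) (auto intro: transR)

lemma cls_closed': "e \<in> classes V R \<Longrightarrow> p \<in> e \<Longrightarrow> (q, p) \<in> R \<Longrightarrow> q \<in> e"
  using cls_closed symR by blast

lemma cls_rel: "e \<in> classes V R \<Longrightarrow> p \<in> e \<Longrightarrow> q \<in> e \<Longrightarrow> (p, q) \<in> R"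
  unfolding classes_def by (erule quotientE) (auto intro: transR symR)

lemma cls_eq: "e \<in> classes V R \<Longrightarrow> e' \<in> classes V R \<Longrightarrow> p \<in> e \<Longrightarrow> p \<in> e' \<Longrightarrow> e = e'"
  unfolding classes_def using quotient_disj[OF eqv] by blast

lemma three: obtains a b c where "a \<in> X" "b \<in> X" "c \<in> X" "a \<noteq> b" "a \<noteq> c" "b \<noteq> c"
  using Xprime unfolding prime_2s_def by blast

lemma notprime3:
  assumes "u \<in> V - X" "v \<in> V - X" "w \<in> V - X" "u \<noteq> v" "u \<noteq> w" "v \<noteq> w"
  shows "\<not> prime_2s (X \<union> {u, v, w}) (induced_rel R (X \<union> {u, v, w}))"
proof
  assume p: "prime_2s (X \<union> {u, v, w}) (induced_rel R (X \<union> {u, v, w}))"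
  have "{u, v, w} \<subseteq> V - X" "card {u, v, w} = 3" using assms by auto
  then show False using S3 p by blast
qed

lemma cases3:
  assumes pu: "prime_2s (X \<union> {u, v}) (induced_rel R (X \<union> {u, v}))"
    and "u \<in> V - X" "v \<in> V - X" "w \<in> V - X" "u \<noteq> v" "u \<noteq> w" "v \<noteq> w"
  shows "is_module (X \<union> {u, v, w}) (induced_rel R (X \<union> {u, v, w})) (X \<union> {u, v}) \<or>
    (\<exists>z\<in>X \<union> {u, v}. is_module (X \<union> {u, v, w}) (induced_rel R (X \<union> {u, v, w})) {z, w})"
proof -
  let ?Z = "X \<union> {u, v, w}"
  let ?W = "X \<union> {u, v}"
  have np: "\<not> prime_2s ?Z (induced_rel R ?Z)" by (rule notprime3) (use assms in auto)
  obtain a b c where abc: "a \<in> X" "b \<in> X" "c \<in> X" "a \<noteq> b" "a \<noteq> c" "b \<noteq> c" by (rule three)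
  have "\<exists>a\<in>?Z. \<exists>b\<in>?Z. \<exists>c\<in>?Z. a \<noteq> b \<and> a \<noteq> c \<and> b \<noteq> c" using abc by blast
  then obtain M where M: "is_module ?Z (induced_rel R ?Z) M" "M \<noteq> {}" "M \<noteq> ?Z" "\<forall>x. M \<noteq> {x}"
    using np unfolding prime_2s_def by blast
  have "is_module ?W (induced_rel R ?W) (M \<inter> ?W)" by (rule mod_restrict[OF M(1)]) auto
  then have "M \<inter> ?W = {} \<or> M \<inter> ?W = ?W \<or> (\<exists>x. M \<inter> ?W = {x})" using prime_mod pu by blast
  moreover have MZ: "M \<subseteq> ?Z" using M(1) unfolding mod_iff by blast
  ultimately show ?thesis
  proof (elim disjE exE)
    assume "M \<inter> ?W = {}"
    then have "M \<subseteq> {w}" using MZ by blast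
    then have False using M by (metis subset_singletonD)
    then show ?thesis ..
  next
    assume "M \<inter> ?W = ?W"
    then have "M = ?W \<or> M = ?Z" using MZ by blast
    then show ?thesis using M by blast
  next
    fix x assume x: "M \<inter> ?W = {x}"
    then have "M = {x} \<or> M = {x, w}" using MZ by auto
    moreover have "x \<in> ?W" using x by blast
    ultimately show ?thesis using M by blast
  qed
qed

lemma set_info:
  assumes "v \<in> ext_set_ef V R X e f" "e \<in> classes V R" "f \<in> classes V R"
  shows "v \<in> V - X \<and> (\<forall>x\<in>X. (v, x) \<in> e \<and> (x, v) \<in> f)"
proof -
  from assms(1) obtain \<beta> where v: "v \<in> V - X" "\<beta> \<in> X" "(v, \<beta>) \<in> e" "(\<beta>, v) \<in> f"
    and m: "is_module (X \<union> {v}) (induced_rel R (X \<union> {v})) X"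
    unfolding ext_set_ef_def ext_set_def by blast
  have "(v, x) \<in> e \<and> (x, v) \<in> f" if x: "x \<in> X" for x
  proof -
    have "((\<beta>, v), (x, v)) \<in> R \<and> ((v, \<beta>), (v, x)) \<in> R"
      by (rule modD[OF m]) (use v x in auto)
    then show ?thesis using v assms(2,3) cls_closed by blast
  qed
  then show ?thesis using v by blast
qed

lemma at_info:
  assumes "v \<in> ext_at_ef V R X \<alpha> e f"
  shows "v \<in> V - X \<and> (v, \<alpha>) \<in> e \<and> (\<alpha>, v) \<in> f \<and>
    (\<forall>x\<in>X - {\<alpha>}. ((x, \<alpha>), (x, v)) \<in> R \<and> ((\<alpha>, x), (v, x)) \<in> R)"
proof -
  from assms obtain v: "v \<in> V - X" "(v, \<alpha>) \<in> e" "(\<alpha>, v) \<in> f"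
    and m: "is_module (X \<union> {v}) (induced_rel R (X \<union> {v})) {\<alpha>, v}"
    unfolding ext_at_ef_def ext_at_def by blast
  have "((\<alpha>, x), (v, x)) \<in> R \<and> ((x, \<alpha>), (x, v)) \<in> R" if x: "x \<in> X - {\<alpha>}" for x
    by (rule modD[OF m]) (use v x in auto)
  then show ?thesis using v by blast
qed

lemma half1:
  assumes v: "v \<in> ext_set_ef V R X e f" and w: "w \<in> ext_set_ef V R X e' f'"
    and cl: "e \<in> classes V R" "f \<in> classes V R" "e' \<in> classes V R" "f' \<in> classes V R"
    and ne: "e \<noteq> e' \<or> f \<noteq> f'"
  shows "(w, v) \<in> e' \<and> (v, w) \<in> f'"
proof -
  obtain a b c where abc: "a \<in> X" "b \<in> X" "c \<in> X" "a \<noteq> b" "a \<noteq> c" "b \<noteq> c" by (rule three)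
  from set_info[OF v cl(1,2)] have vX: "v \<in> V - X" and ve: "\<forall>x\<in>X. (v, x) \<in> e \<and> (x, v) \<in> f" by auto
  from set_info[OF w cl(3,4)] have wX: "w \<in> V - X" and we: "\<forall>x\<in>X. (w, x) \<in> e' \<and> (x, w) \<in> f'" by auto
  have vw: "v \<noteq> w"
  proof
    assume "v = w"
    then have "e = e'" "f = f'" using ve we abc(1) cls_eq cl by blast+
    then show False using ne by blast
  qed
  obtain u where "outside_edge V R X v u" using noiso vX by blast
  then have uX: "u \<in> V - X" "u \<noteq> v" and pu: "prime_2s (X \<union> {u, v}) (induced_rel R (X \<union> {u, v}))"
    unfolding outside_edge_def by (auto simp: insert_commute)
  have uw: "u \<noteq> w"
  proof
    assume uw: "u = w"
    have "is_module (X \<union> {u, v}) (induced_rel R (X \<union> {u, v})) X"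
    proof (rule modI)
      fix x y z assume xyz: "x \<in> X" "y \<in> X" "z \<in> X \<union> {u, v}" "z \<notin> X"
      then have "z = u \<or> z = v" by blast
      then show "((x, z), (y, z)) \<in> R \<and> ((z, x), (z, y)) \<in> R"
        using xyz ve we uw cls_rel cl by metis
    qed auto
    then show False using nontriv[OF pu _ abc(1,2,4), of u] uX by blast
  qed
  from cases3[OF pu uX(1) vX wX uX(2) uw vw]
  show ?thesis
  proof (elim disjE bexE)
    assume m: "is_module (X \<union> {u, v, w}) (induced_rel R (X \<union> {u, v, w})) (X \<union> {u, v})"
    have "((v, w), (a, w)) \<in> R \<and> ((w, v), (w, a)) \<in> R"
      by (rule modD[OF m]) (use abc wX uw vw in auto)
    then show ?thesis using we abc(1) cl cls_closed' by blast
  next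
    fix z assume z: "z \<in> X \<union> {u, v}"
      and m: "is_module (X \<union> {u, v, w}) (induced_rel R (X \<union> {u, v, w})) {z, w}"
    have zw: "z \<noteq> w" using z wX uw vw by blast
    consider "z \<in> X" | "z = v" | "z = u" using z by blast
    then show ?thesis
    proof cases
      case 1
      have zx: "(z, x) \<in> e' \<and> (x, z) \<in> f'" if x: "x \<in> X" "x \<noteq> z" for x
      proof -
        have "((z, x), (w, x)) \<in> R \<and> ((x, z), (x, w)) \<in> R"
          by (rule modD[OF m]) (use x wX in auto)
        then show ?thesis using we x cl cls_closed' by blast
      qed
      have "is_module X (induced_rel R X) (X - {z})"
      proof (rule modI)
        fix x y t assume xyt: "x \<in> X - {z}" "y \<in> X - {z}" "t \<in> X" "t \<notin> X - {z}"
        then have "t = z" by blast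
        then show "((x, t), (y, t)) \<in> R \<and> ((t, x), (t, y)) \<in> R"
          using xyt zx cl cls_rel by blast
      qed auto
      moreover obtain p q where "p \<in> X - {z}" "q \<in> X - {z}" "p \<noteq> q"
        using abc by blast
      ultimately have False using nontriv[OF Xprime, of "X - {z}" p q z] 1 by blast
      then show ?thesis ..
    next
      case 2
      have "((v, a), (w, a)) \<in> R \<and> ((a, v), (a, w)) \<in> R"
        by (rule modD[OF m]) (use abc 2 vX wX in auto)
      then have "e = e'" "f = f'" using ve we abc(1) cl cls_closed cls_eq by blast+
      then show ?thesis using ne by blast
    next
      case 3
      have uxw: "((u, x), (w, x)) \<in> R \<and> ((x, u), (x, w)) \<in> R" if x: "x \<in> X" for x
        by (rule modD[OF m]) (use x 3 uX wX in auto)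
      have "is_module (X \<union> {u, v}) (induced_rel R (X \<union> {u, v})) X"
      proof (rule modI)
        fix x y t assume xyt: "x \<in> X" "y \<in> X" "t \<in> X \<union> {u, v}" "t \<notin> X"
        then have "t = u \<or> t = v" by blast
        then show "((x, t), (y, t)) \<in> R \<and> ((t, x), (t, y)) \<in> R"
        proof
          assume t: "t = u"
          have "((x, w), (y, w)) \<in> R" "((w, x), (w, y)) \<in> R" using xyt we cl cls_rel by blast+
          then show ?thesis using t uxw[OF xyt(1)] uxw[OF xyt(2)] symR transR by meson
        next
          assume t: "t = v"
          show ?thesis using t xyt ve cl cls_rel by blast
        qed
      qed auto
      then show ?thesis using nontriv[OF pu _ abc(1,2,4), of u] uX by blast
    qed
  qed
qed

lemma half2:
  assumes v: "v \<in> ext_at_ef V R X \<alpha> e f" and w: "w \<in> ext_at_ef V R X \<alpha> e' f'"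
    and \<alpha>: "\<alpha> \<in> X"
    and cl: "e \<in> classes V R" "f \<in> classes V R" "e' \<in> classes V R" "f' \<in> classes V R"
    and ne: "e \<noteq> e' \<or> f \<noteq> f'"
  shows "(v, w) \<in> e \<and> (w, v) \<in> f"
proof -
  obtain a b c where abc: "a \<in> X" "b \<in> X" "c \<in> X" "a \<noteq> b" "a \<noteq> c" "b \<noteq> c" by (rule three)
  obtain c1 c2 where c12: "c1 \<in> X - {\<alpha>}" "c2 \<in> X - {\<alpha>}" "c1 \<noteq> c2" using abc by blast
  from at_info[OF v] have vX: "v \<in> V - X" and ve: "(v, \<alpha>) \<in> e" "(\<alpha>, v) \<in> f"
    and vm: "\<forall>x\<in>X - {\<alpha>}. ((x, \<alpha>), (x, v)) \<in> R \<and> ((\<alpha>, x), (v, x)) \<in> R" by auto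
  from at_info[OF w] have wX: "w \<in> V - X" and we: "(w, \<alpha>) \<in> e'" "(\<alpha>, w) \<in> f'"
    and wm: "\<forall>x\<in>X - {\<alpha>}. ((x, \<alpha>), (x, w)) \<in> R \<and> ((\<alpha>, x), (w, x)) \<in> R" by auto
  have vw: "v \<noteq> w"
  proof
    assume "v = w"
    then have "e = e'" "f = f'" using ve we cls_eq cl by blast+
    then show False using ne by blast
  qed
  obtain u where "outside_edge V R X v u" using noiso vX by blast
  then have uX: "u \<in> V - X" "u \<noteq> v" and pu: "prime_2s (X \<union> {u, v}) (induced_rel R (X \<union> {u, v}))"
    unfolding outside_edge_def by (auto simp: insert_commute)
  have uw: "u \<noteq> w"
  proof
    assume uw: "u = w"
    have "is_module (X \<union> {u, v}) (induced_rel R (X \<union> {u, v})) {\<alpha>, v, w}"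
    proof (rule modI)
      fix x y t assume xyt: "x \<in> {\<alpha>, v, w}" "y \<in> {\<alpha>, v, w}" "t \<in> X \<union> {u, v}" "t \<notin> {\<alpha>, v, w}"
      then have t: "t \<in> X - {\<alpha>}" using uw by blast
      have h: "((s, t), (\<alpha>, t)) \<in> R \<and> ((t, s), (t, \<alpha>)) \<in> R" if "s \<in> {\<alpha>, v, w}" for s
      proof -
        have "((\<alpha>, t), (\<alpha>, t)) \<in> R \<and> ((t, \<alpha>), (t, \<alpha>)) \<in> R"
          using reflR[OF conjunct2[OF vm[rule_format, OF t]]] reflR[OF conjunct1[OF vm[rule_format, OF t]]] by blast
        then show ?thesis using that vm wm t symR by blast
      qed
      show "((x, t), (y, t)) \<in> R \<and> ((t, x), (t, y)) \<in> R"
        using via[OF conjunct1[OF h[OF xyt(1)]] conjunct1[OF h[OF xyt(2)]]] via[OF conjunct2[OF h[OF xyt(1)]] conjunct2[OF h[OF xyt(2)]]] by blast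
    qed (use \<alpha> uw in auto)
    moreover have "\<alpha> \<noteq> v" "c1 \<in> X \<union> {u, v}" "c1 \<notin> {\<alpha>, v, w}" using c12 vX wX \<alpha> by auto
    ultimately show False using nontriv[OF pu, of "{\<alpha>, v, w}" \<alpha> v c1] by blast
  qed
  from cases3[OF pu uX(1) vX wX uX(2) uw vw]
  show ?thesis
  proof (elim disjE bexE)
    assume m: "is_module (X \<union> {u, v, w}) (induced_rel R (X \<union> {u, v, w})) (X \<union> {u, v})"
    have A: "((x, w), (\<alpha>, w)) \<in> R \<and> ((w, x), (w, \<alpha>)) \<in> R" if "x \<in> X" for x
      by (rule modD[OF m]) (use that \<alpha> wX uw vw in auto)
    have "is_module X (induced_rel R X) (X - {\<alpha>})"
    proof (rule modI)
      fix x y t assume xyt: "x \<in> X - {\<alpha>}" "y \<in> X - {\<alpha>}" "t \<in> X" "t \<notin> X - {\<alpha>}"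
      then have t: "t = \<alpha>" by blast
      have "((x, \<alpha>), (\<alpha>, w)) \<in> R" "((y, \<alpha>), (\<alpha>, w)) \<in> R"
        "((\<alpha>, x), (w, \<alpha>)) \<in> R" "((\<alpha>, y), (w, \<alpha>)) \<in> R"
        using transR[OF conjunct1[OF wm[rule_format, OF xyt(1)]] conjunct1[OF A[of x]]] transR[OF conjunct1[OF wm[rule_format, OF xyt(2)]] conjunct1[OF A[of y]]] transR[OF conjunct2[OF wm[rule_format, OF xyt(1)]] conjunct2[OF A[of x]]] transR[OF conjunct2[OF wm[rule_format, OF xyt(2)]] conjunct2[OF A[of y]]] xyt by auto
      then show "((x, t), (y, t)) \<in> R \<and> ((t, x), (t, y)) \<in> R"
        using t via by blast
    qed auto
    then have False using nontriv[OF Xprime _ c12, of \<alpha>] \<alpha> by blast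
    then show ?thesis ..
  next
    fix z assume z: "z \<in> X \<union> {u, v}"
      and m: "is_module (X \<union> {u, v, w}) (induced_rel R (X \<union> {u, v, w})) {z, w}"
    consider "z \<in> X" "z \<noteq> \<alpha>" | "z = \<alpha>" | "z = v" | "z = u" using z by blast
    then show ?thesis
    proof cases
      case 1
      have zx: "((z, x), (w, x)) \<in> R \<and> ((x, z), (x, w)) \<in> R" if x: "x \<in> X" "x \<noteq> z" for x
        by (rule modD[OF m]) (use x wX in auto)
      have "is_module X (induced_rel R X) {z, \<alpha>}"
      proof (rule modI)
        fix x y t assume xyt: "x \<in> {z, \<alpha>}" "y \<in> {z, \<alpha>}" "t \<in> X" "t \<notin> {z, \<alpha>}"
        have tX: "t \<in> X - {\<alpha>}" and tz: "t \<noteq> z" using xyt by auto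
        have h: "((s, t), (\<alpha>, t)) \<in> R \<and> ((t, s), (t, \<alpha>)) \<in> R" if "s \<in> {z, \<alpha>}" for s
        proof -
          have "((\<alpha>, t), (\<alpha>, t)) \<in> R \<and> ((t, \<alpha>), (t, \<alpha>)) \<in> R"
            using reflR[OF conjunct2[OF wm[rule_format, OF tX]]] reflR[OF conjunct1[OF wm[rule_format, OF tX]]] by blast
          moreover have "((z, t), (\<alpha>, t)) \<in> R \<and> ((t, z), (t, \<alpha>)) \<in> R"
            using transR[OF conjunct1[OF zx[OF xyt(3) tz]] symR[OF conjunct2[OF wm[rule_format, OF tX]]]] transR[OF conjunct2[OF zx[OF xyt(3) tz]] symR[OF conjunct1[OF wm[rule_format, OF tX]]]] by blast
          ultimately show ?thesis using that by blast
        qed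
        show "((x, t), (y, t)) \<in> R \<and> ((t, x), (t, y)) \<in> R"
          using via[OF conjunct1[OF h[OF xyt(1)]] conjunct1[OF h[OF xyt(2)]]] via[OF conjunct2[OF h[OF xyt(1)]] conjunct2[OF h[OF xyt(2)]]] by blast
      qed (use 1 \<alpha> in auto)
      moreover obtain t where "t \<in> X" "t \<notin> {z, \<alpha>}" using abc by blast
      ultimately have False using nontriv[OF Xprime, of "{z, \<alpha>}" z \<alpha> t] 1 by blast
      then show ?thesis ..
    next
      case 2
      have "((\<alpha>, v), (w, v)) \<in> R \<and> ((v, \<alpha>), (v, w)) \<in> R"
        by (rule modD[OF m]) (use 2 vX vw \<alpha> in auto)
      then show ?thesis using ve cl cls_closed by blast
    next
      case 3
      have "((v, \<alpha>), (w, \<alpha>)) \<in> R \<and> ((\<alpha>, v), (\<alpha>, w)) \<in> R"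
        by (rule modD[OF m]) (use \<alpha> 3 vX wX in auto)
      then have "e = e'" "f = f'" using ve we cl cls_closed cls_eq by blast+
      then show ?thesis using ne by blast
    next
      case 4
      have uxw: "((u, x), (w, x)) \<in> R \<and> ((x, u), (x, w)) \<in> R" if x: "x \<in> X" for x
        by (rule modD[OF m]) (use x 4 uX wX in auto)
      have "is_module (X \<union> {u, v}) (induced_rel R (X \<union> {u, v})) {\<alpha>, u, v}"
      proof (rule modI)
        fix x y t assume xyt: "x \<in> {\<alpha>, u, v}" "y \<in> {\<alpha>, u, v}" "t \<in> X \<union> {u, v}" "t \<notin> {\<alpha>, u, v}"
        then have t: "t \<in> X - {\<alpha>}" by blast
        then have tX: "t \<in> X" by blast
        have h: "((s, t), (\<alpha>, t)) \<in> R \<and> ((t, s), (t, \<alpha>)) \<in> R" if "s \<in> {\<alpha>, u, v}" for s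
        proof -
          have "((\<alpha>, t), (\<alpha>, t)) \<in> R \<and> ((t, \<alpha>), (t, \<alpha>)) \<in> R"
            using reflR[OF conjunct2[OF vm[rule_format, OF t]]] reflR[OF conjunct1[OF vm[rule_format, OF t]]] by blast
          moreover have "((u, t), (\<alpha>, t)) \<in> R \<and> ((t, u), (t, \<alpha>)) \<in> R"
            using transR[OF conjunct1[OF uxw[OF tX]] symR[OF conjunct2[OF wm[rule_format, OF t]]]] transR[OF conjunct2[OF uxw[OF tX]] symR[OF conjunct1[OF wm[rule_format, OF t]]]] by blast
          moreover have "((v, t), (\<alpha>, t)) \<in> R \<and> ((t, v), (t, \<alpha>)) \<in> R"
            using vm t symR by blast
          ultimately show ?thesis using that by blast
        qed
        show "((x, t), (y, t)) \<in> R \<and> ((t, x), (t, y)) \<in> R"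
          using via[OF conjunct1[OF h[OF xyt(1)]] conjunct1[OF h[OF xyt(2)]]] via[OF conjunct2[OF h[OF xyt(1)]] conjunct2[OF h[OF xyt(2)]]] by blast
      qed (use \<alpha> in auto)
      moreover have "\<alpha> \<noteq> v" "c1 \<in> X \<union> {u, v}" "c1 \<notin> {\<alpha>, u, v}" using c12 vX uX \<alpha> by auto
      ultimately have False using nontriv[OF pu, of "{\<alpha>, u, v}" \<alpha> v c1] by blast
      then show ?thesis ..
    qed
  qed
qed

end


theorem lemma3p6:
  fixes V :: "'a set" and R :: "(('a \<times> 'a) \<times> ('a \<times> 'a)) set" and X :: "'a set"
    and e f :: "('a \<times> 'a) set" and \<alpha> :: 'a
  assumes two: "two_structure V R"
    and XV: "X \<subset> V"
    and Xprime: "prime_2s X (induced_rel R X)"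
    and S3: "\<not> (\<exists>Y. Y \<subseteq> V - X \<and> card Y = 3 \<and> prime_2s (X \<union> Y) (induced_rel R (X \<union> Y)))"
    and e: "e \<in> classes V R" and f: "f \<in> classes V R"
    and \<alpha>: "\<alpha> \<in> X"
    and noiso: "\<forall>u\<in>V - X. \<exists>w. outside_edge V R X u w"
  shows "(ext_set_ef V R X e f \<noteq> {} \<longrightarrow>
            (\<forall>e'\<in>classes V R. \<forall>f'\<in>classes V R. {e', f'} \<noteq> {e, f} \<longrightarrow> ext_set_ef V R X e' f' = {}))
       \<and> (ext_at_ef V R X \<alpha> e f \<noteq> {} \<longrightarrow>
            (\<forall>e'\<in>classes V R. \<forall>f'\<in>classes V R. {e', f'} \<noteq> {e, f} \<longrightarrow> ext_at_ef V R X \<alpha> e' f' = {}))"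
proof -
  interpret L V R X
  proof
    show "equiv (offdiag V) R" using two unfolding two_structure_def .
    show "X \<subseteq> V" using XV by blast
  qed (fact Xprime S3 noiso)+
  have P1: "ext_set_ef V R X e' f' = {}"
    if v: "v \<in> ext_set_ef V R X e f" and cl: "e' \<in> classes V R" "f' \<in> classes V R"
      and ne: "{e', f'} \<noteq> {e, f}" for v e' f'
  proof (rule ccontr)
    assume "ext_set_ef V R X e' f' \<noteq> {}"
    then obtain w where w: "w \<in> ext_set_ef V R X e' f'" by blast
    have ne1: "e \<noteq> e' \<or> f \<noteq> f'" using ne by auto
    have 1: "(w, v) \<in> e' \<and> (v, w) \<in> f'" by (rule half1[OF v w e f cl ne1])
    have 2: "(v, w) \<in> e \<and> (w, v) \<in> f" by (rule half1[OF w v cl e f]) (use ne1 in auto)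
    have "e' = f" using cls_eq[OF cl(1) f] 1 2 by blast
    moreover have "f' = e" using cls_eq[OF cl(2) e] 1 2 by blast
    ultimately show False using ne by (simp add: insert_commute)
  qed
  have P2: "ext_at_ef V R X \<alpha> e' f' = {}"
    if v: "v \<in> ext_at_ef V R X \<alpha> e f" and cl: "e' \<in> classes V R" "f' \<in> classes V R"
      and ne: "{e', f'} \<noteq> {e, f}" for v e' f'
  proof (rule ccontr)
    assume "ext_at_ef V R X \<alpha> e' f' \<noteq> {}"
    then obtain w where w: "w \<in> ext_at_ef V R X \<alpha> e' f'" by blast
    have ne1: "e \<noteq> e' \<or> f \<noteq> f'" using ne by auto
    have 1: "(v, w) \<in> e \<and> (w, v) \<in> f" by (rule half2[OF v w \<alpha> e f cl ne1])
    have 2: "(w, v) \<in> e' \<and> (v, w) \<in> f'" by (rule half2[OF w v \<alpha> cl e f]) (use ne1 in auto)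
    have "e' = f" using cls_eq[OF cl(1) f] 1 2 by blast
    moreover have "f' = e" using cls_eq[OF cl(2) e] 1 2 by blast
    ultimately show False using ne by (simp add: insert_commute)
  qed
  show ?thesis
  proof (intro conjI impI ballI)
    fix e' f' assume "ext_set_ef V R X e f \<noteq> {}" "e' \<in> classes V R" "f' \<in> classes V R"
      "{e', f'} \<noteq> {e, f}"
    then show "ext_set_ef V R X e' f' = {}" using P1 by (metis ex_in_conv)
  next
    fix e' f' assume "ext_at_ef V R X \<alpha> e f \<noteq> {}" "e' \<in> classes V R" "f' \<in> classes V R"
      "{e', f'} \<noteq> {e, f}"
    then show "ext_at_ef V R X \<alpha> e' f' = {}" using P2 by (metis ex_in_conv)
  qed
qed

end
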